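(* Let $1 \leq k \leq n-1$ be integers and let $\delta_0$ be the largest real eigenvalue of the linear operator $\hat c_1$ associated with the Grassmannian $\mathrm{Gr}(k,n)$ (defined in the context). Then $\delta_0 \geq \dim \mathrm{Gr}(k,n) + 1 = k(n-k)+1$, with equality if and only if $\mathrm{Gr}(k,n)$ is the projective space $\mathbb{P}^{n-1}$ (i.e. $k=1$ or $k=n-1$).
   Context: $\mathrm{Gr}(k,n)$ is the Grassmannian of $k$-dimensional linear subspaces of $\mathbb{C}^n$. Let $\Lambda$ be the set of partitions $\lambda=(\lambda_1\geq \cdots\geq \lambda_k)$ with $n-k\geq \lambda_1$ and $\lambda_k\geq 0$, and $|\lambda|=\lambda_1+\cdots+\lambda_k$. For $\lambda\in\Lambda$ with $\lambda_1=n-k$ and $\lambda_k>0$ put $\lambda^*=(\lambda_2-1\geq\cdots\geq\lambda_k-1\geq 0)$; otherwise $\lambda^*$ does not exist. The operator $\hat c_1$ (quantum multiplication by the anticanonical class $c_1(\mathrm{Gr}(k,n))=n\sigma_{(1)}$ in small quantum cohomology, specialized at $q=1$) is the linear endomorphism of the real (or complex) vector space with basis $\{\sigma_\lambda\}_{\lambda\in\Lambda}$ given by $\hat c_1(\sigma_\lambda)=n\sigma_{\lambda^*}+n\sum\sigma_\mu$, the sum over all $\mu\in\Lambda$ with $|\mu|=|\lambda|+1$ and $\lambda\subset\mu$, and the term $n\sigma_{\lambda^*}$ omitted if $\lambda^*$ does not exist. $\delta_0$ denotes the largest real eigenvalue of $\hat c_1$ (which equals the maximum modulus of its eigenvalues).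 *)

theory Defs
  imports Complex_Main
begin

text \<open>Partitions in a k x (n-k) box, represented as lists of length k
  (lambda_1 \<ge> ... \<ge> lambda_k, with lambda_1 \<le> n-k).\<close>
definition box_parts :: "nat \<Rightarrow> nat \<Rightarrow> nat list set" where
  "box_parts k n = {l. length l = k \<and> sorted_wrt (\<ge>) l \<and> (\<forall>x\<in>set l. x \<le> n - k)}"

definition star_exists :: "nat \<Rightarrow> nat \<Rightarrow> nat list \<Rightarrow> bool" where
  "star_exists k n l \<longleftrightarrow> l \<noteq> [] \<and> hd l = n - k \<and> last l > 0"

definition star :: "nat list \<Rightarrow> nat list" where
  "star l = map (\<lambda>x. x - 1) (tl l) @ [0]"

text \<open>Coefficient of sigma_mu in c1hat(sigma_lambda).\<close>
definition c1_coeff :: "nat \<Rightarrow> nat \<Rightarrow> nat list \<Rightarrow> nat list \<Rightarrow> real" where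
  "c1_coeff k n mu l =
     (if star_exists k n l \<and> star l = mu then real n else 0)
   + (if sum_list mu = sum_list l + 1 \<and> list_all2 (\<le>) l mu then real n else 0)"

definition c1_hat :: "nat \<Rightarrow> nat \<Rightarrow> (nat list \<Rightarrow> real) \<Rightarrow> (nat list \<Rightarrow> real)" where
  "c1_hat k n v = (\<lambda>mu. \<Sum>l\<in>box_parts k n. c1_coeff k n mu l * v l)"

definition c1_real_eigenvalue :: "nat \<Rightarrow> nat \<Rightarrow> real \<Rightarrow> bool" where
  "c1_real_eigenvalue k n d \<longleftrightarrow>
     (\<exists>v. (\<exists>mu\<in>box_parts k n. v mu \<noteq> 0) \<and>
          (\<forall>mu\<in>box_parts k n. c1_hat k n v mu = d * v mu))"

definition delta0 :: "nat \<Rightarrow> nat \<Rightarrow> real" where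
  "delta0 k n = Max {d. c1_real_eigenvalue k n d}"

end

theory Submission
  imports Defs "HOL-Analysis.Complex_Transcendental" "Jordan_Normal_Form.Spectral_Radius"
begin


definition dec :: "nat list \<Rightarrow> nat \<Rightarrow> nat list" where
  "dec mu j = mu[j := mu!j - 1]"
definition Vset :: "nat \<Rightarrow> nat list \<Rightarrow> nat set" where
  "Vset k mu = {j. j < k \<and> 1 \<le> mu!j \<and> (Suc j < k \<longrightarrow> mu!(Suc j) < mu!j)}"
definition SV :: "nat \<Rightarrow> nat \<Rightarrow> nat list \<Rightarrow> bool" where
  "SV k n mu \<longleftrightarrow> mu!(k-1) = 0 \<and> mu!0 < n-k"
definition lst :: "nat \<Rightarrow> nat \<Rightarrow> nat list \<Rightarrow> nat list" where
  "lst k n mu = (n-k) # map Suc (butlast mu)"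

lemma bp_iff: "l \<in> box_parts k n \<longleftrightarrow> length l = k \<and> (\<forall>i j. i < j \<longrightarrow> j < k \<longrightarrow> l!j \<le> l!i) \<and> (\<forall>i<k. l!i \<le> n-k)"
  unfolding box_parts_def sorted_wrt_iff_nth_less all_set_conv_all_nth by auto

lemma bp_mono: "l \<in> box_parts k n \<Longrightarrow> i \<le> j \<Longrightarrow> j < k \<Longrightarrow> l!j \<le> l!i"
  unfolding bp_iff by (cases "i = j") auto

lemma sum_list_nth: "sum_list l = (\<Sum>i<length l. l!i)"
  by (simp add: sum_list_sum_nth atLeast0LessThan)

lemma box_preds:
  assumes mu: "mu \<in> box_parts k n"
  shows "{l \<in> box_parts k n. sum_list mu = sum_list l + 1 \<and> list_all2 (\<le>) l mu} = dec mu ` Vset k mu"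
proof (intro equalityI subsetI)
  fix l assume "l \<in> {l \<in> box_parts k n. sum_list mu = sum_list l + 1 \<and> list_all2 (\<le>) l mu}"
  hence l: "l \<in> box_parts k n" and s: "sum_list mu = sum_list l + 1" and le: "list_all2 (\<le>) l mu" by auto
  have lk: "length l = k" and muk: "length mu = k" using l mu unfolding bp_iff by auto
  have lei: "\<And>i. i < k \<Longrightarrow> l!i \<le> mu!i" using le lk by (simp add: list_all2_conv_all_nth)
  define D where "D i = mu!i - l!i" for i
  have sD: "(\<Sum>i<k. D i) = 1"
  proof -
    have "(\<Sum>i<k. D i) = (\<Sum>i<k. mu!i) - (\<Sum>i<k. l!i)" unfolding D_def
      by (rule sum_subtractf_nat) (auto intro: lei)
    thus ?thesis using s unfolding sum_list_nth lk muk by simp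
  qed
  obtain j where j: "j < k" "D j \<noteq> 0"
  proof -
    have "\<not> (\<forall>i\<in>{..<k}. D i = 0)"
    proof
      assume "\<forall>i\<in>{..<k}. D i = 0"
      hence "(\<Sum>i<k. D i) = 0" by simp
      thus False using sD by simp
    qed
    thus ?thesis using that by auto
  qed
  have split: "(\<Sum>i<k. D i) = D j + (\<Sum>i\<in>{..<k}-{j}. D i)" using j by (simp add: sum.remove)
  hence e1: "D j + (\<Sum>i\<in>{..<k}-{j}. D i) = 1" using sD by simp
  hence Dj: "D j = 1" and rest: "(\<Sum>i\<in>{..<k}-{j}. D i) = 0" using j(2) by linarith+
  have Di: "\<And>i. i < k \<Longrightarrow> i \<noteq> j \<Longrightarrow> D i = 0" using rest by auto
  have ldec: "l = dec mu j"
  proof (rule nth_equalityI)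
    show "length l = length (dec mu j)" using lk muk by (simp add: dec_def)
    fix i assume "i < length l"
    hence i: "i < k" using lk by simp
    show "l ! i = dec mu j ! i"
    proof (cases "i = j")
      case True thus ?thesis using Dj lei[OF i] muk i unfolding D_def dec_def by auto
    next
      case False thus ?thesis using Di[OF i False] lei[OF i] muk i unfolding D_def dec_def by auto
    qed
  qed
  have "j \<in> Vset k mu"
  proof -
    have "1 \<le> mu!j" using Dj unfolding D_def by simp
    moreover have "Suc j < k \<longrightarrow> mu!(Suc j) < mu!j"
    proof
      assume sj: "Suc j < k"
      have "mu!(Suc j) = l!(Suc j)" using Di[OF sj] lei[OF sj] unfolding D_def by simp
      also have "\<dots> \<le> l!j" using l sj unfolding bp_iff by auto
      also have "\<dots> < mu!j" using Dj lei[OF j(1)] unfolding D_def by simp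
      finally show "mu!(Suc j) < mu!j" .
    qed
    ultimately show ?thesis using j unfolding Vset_def by auto
  qed
  thus "l \<in> dec mu ` Vset k mu" using ldec by auto
next
  fix l assume "l \<in> dec mu ` Vset k mu"
  then obtain j where j: "j \<in> Vset k mu" and ld: "l = dec mu j" by auto
  have jk: "j < k" and mj: "1 \<le> mu!j" and nx: "Suc j < k \<Longrightarrow> mu!(Suc j) < mu!j" using j unfolding Vset_def by auto
  have muk: "length mu = k" using mu unfolding bp_iff by auto
  have nth_l: "\<And>i. i < k \<Longrightarrow> l!i = (if i = j then mu!j - 1 else mu!i)" using muk unfolding ld dec_def by auto
  have lk: "length l = k" using muk unfolding ld dec_def by simp
  have l: "l \<in> box_parts k n"
    unfolding bp_iff
  proof (intro conjI allI impI)
    show "length l = k" by fact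
    fix i i' assume ii: "i < i'" "i' < k"
    show "l!i' \<le> l!i"
    proof -
      have a: "mu!i' \<le> mu!i" using bp_mono[OF mu] ii by auto
      show ?thesis
      proof (cases "i = j")
        case True
        have "mu!i' \<le> mu!(Suc j)" using bp_mono[OF mu, of "Suc j" i'] ii True by auto
        also have "\<dots> < mu!j" using nx ii True by auto
        finally show ?thesis using nth_l ii True by auto
      next
        case False thus ?thesis using nth_l ii a by auto
      qed
    qed
  next
    fix i assume "i < k"
    thus "l!i \<le> n-k" using nth_l mu unfolding bp_iff by (auto simp: le_diff_conv)
  qed
  have pw: "\<And>i. i < k \<Longrightarrow> mu!i = l!i + (if i = j then 1 else 0)" using nth_l mj by auto
  have "sum_list mu = (\<Sum>i<k. l!i + (if i = j then 1 else 0))" unfolding sum_list_nth muk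
    by (intro sum.cong refl) (metis pw lessThan_iff)
  also have "\<dots> = sum_list l + 1" unfolding sum_list_nth lk sum.distrib using jk by simp
  finally have s: "sum_list mu = sum_list l + 1" .
  have "list_all2 (\<le>) l mu" using lk muk pw by (auto simp: list_all2_conv_all_nth)
  thus "l \<in> {l \<in> box_parts k n. sum_list mu = sum_list l + 1 \<and> list_all2 (\<le>) l mu}" using l s by auto
qed

lemma dec_inj: assumes "length mu = k" shows "inj_on (dec mu) (Vset k mu)"
proof (rule inj_onI)
  fix j j' assume j: "j \<in> Vset k mu" and j': "j' \<in> Vset k mu" and e: "dec mu j = dec mu j'"
  show "j = j'"
  proof (rule ccontr)
    assume ne: "j \<noteq> j'"
    have "j < length mu \<or> True" by simp
    from e have "dec mu j ! j = dec mu j' ! j" by simp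
    moreover have "1 \<le> mu!j" "j < length mu" using j \<open>length mu = k\<close> unfolding Vset_def by auto
    ultimately show False using ne unfolding dec_def by auto
  qed
qed

lemma lst_nth: "length mu = k \<Longrightarrow> i < k \<Longrightarrow> lst k n mu ! i = (if i = 0 then n - k else Suc (mu!(i-1)))"
  unfolding lst_def by (auto simp: nth_Cons' nth_butlast)

lemma lst_len: "length mu = k \<Longrightarrow> 1 \<le> k \<Longrightarrow> length (lst k n mu) = k"
  unfolding lst_def by simp

lemma star_preds:
  assumes mu: "mu \<in> box_parts k n" and k1: "1 \<le> k" and kn: "k < n"
  shows "{l \<in> box_parts k n. star_exists k n l \<and> star l = mu} = (if SV k n mu then {lst k n mu} else {})"
proof -
  have muk: "length mu = k" using mu unfolding bp_iff by auto
  have A: "SV k n mu \<and> l = lst k n mu" if l: "l \<in> box_parts k n" and se: "star_exists k n l" and st: "star l = mu" for l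
  proof -
    have lk: "length l = k" using l unfolding bp_iff by auto
    have ne: "l \<noteq> []" and hd: "hd l = n - k" and lpos: "last l > 0" using se unfolding star_exists_def by auto
    have l0: "l!0 = n - k" using hd ne by (simp add: hd_conv_nth)
    have lpos': "\<And>i. i < k \<Longrightarrow> l!i > 0"
    proof -
      fix i assume i: "i < k"
      have "last l = l!(k-1)" using ne lk by (simp add: last_conv_nth)
      moreover have "l!(k-1) \<le> l!i" using bp_mono[OF l, of i "k-1"] i by auto
      ultimately show "l!i > 0" using lpos by simp
    qed
    have mu_nth: "\<And>i. i < k \<Longrightarrow> mu!i = (if i < k - 1 then l!(Suc i) - 1 else 0)"
      using st lk unfolding star_def by (auto simp: nth_append nth_tl)
    have z: "mu!(k-1) = 0" using mu_nth k1 by simp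
    have m0: "mu!0 < n - k"
    proof (cases "k = 1")
      case True thus ?thesis using z kn by simp
    next
      case False
      hence "mu!0 = l!1 - 1" using mu_nth k1 by simp
      moreover have "l!1 \<le> l!0" using bp_mono[OF l, of 0 1] False k1 by auto
      moreover have "l!1 > 0" using lpos' False k1 by auto
      ultimately show ?thesis using l0 by linarith
    qed
    have "l = lst k n mu"
    proof (rule nth_equalityI)
      show "length l = length (lst k n mu)" using lk muk k1 by (simp add: lst_len)
      fix i assume "i < length l"
      hence i: "i < k" using lk by simp
      show "l!i = lst k n mu ! i"
      proof (cases "i = 0")
        case True thus ?thesis using lst_nth[OF muk i] l0 by simp
      next
        case False
        hence "mu!(i-1) = l!i - 1" using mu_nth[of "i-1"] i by simp
        thus ?thesis using lst_nth[OF muk i] False lpos'[OF i] by simp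
      qed
    qed
    thus ?thesis using z m0 unfolding SV_def by simp
  qed
  have B: "lst k n mu \<in> box_parts k n \<and> star_exists k n (lst k n mu) \<and> star (lst k n mu) = mu" if sv: "SV k n mu"
  proof -
    let ?l = "lst k n mu"
    have z: "mu!(k-1) = 0" and m0: "mu!0 < n-k" using sv unfolding SV_def by auto
    have ln: "\<And>i. i < k \<Longrightarrow> ?l!i = (if i = 0 then n - k else Suc (mu!(i-1)))" using lst_nth[OF muk] by auto
    have bnd: "\<And>i. i < k \<Longrightarrow> ?l!i \<le> n - k"
    proof -
      fix i assume i: "i < k"
      show "?l!i \<le> n-k"
      proof (cases "i = 0")
        case False
        have "mu!(i-1) \<le> mu!0" using bp_mono[OF mu, of 0 "i-1"] i by auto
        thus ?thesis using ln[OF i] False m0 by simp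
      qed (simp add: lst_def)
    qed
    have inS: "?l \<in> box_parts k n" unfolding bp_iff
    proof (intro conjI allI impI)
      show "length ?l = k" using muk k1 by (simp add: lst_len)
      fix i j assume ij: "i < j" "j < k"
      show "?l!j \<le> ?l!i"
      proof (cases "i = 0")
        case True thus ?thesis using bnd[OF ij(2)] ln ij by auto
      next
        case False
        have "mu!(j-1) \<le> mu!(i-1)" using bp_mono[OF mu, of "i-1" "j-1"] ij False by auto
        thus ?thesis using ln ij False by auto
      qed
    next
      fix i assume "i < k" thus "?l!i \<le> n-k" by (rule bnd)
    qed
    have se: "star_exists k n ?l"
    proof -
      have ne: "?l \<noteq> []" unfolding lst_def by simp
      have "last ?l = ?l!(k-1)" using ne muk k1 by (simp add: last_conv_nth lst_len)
      also have "\<dots> > 0" using ln[of "k-1"] k1 kn by auto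
      finally show ?thesis unfolding star_exists_def using ne by (simp add: lst_def)
    qed
    have lm: "last mu = 0" using z muk k1 by (subst last_conv_nth) auto
    have "star ?l = butlast mu @ [0]"
      unfolding star_def lst_def by (simp add: comp_def)
    also have "butlast mu @ [0] = mu"
      by (metis lm append_butlast_last_id k1 list.size(3) muk not_one_le_zero)
    finally show ?thesis using inS se by simp
  qed
  show ?thesis
  proof (cases "SV k n mu")
    case True
    thus ?thesis using A B by auto
  next
    case False
    thus ?thesis using A by auto
  qed
qed

lemma finite_bp: "finite (box_parts k n)"
proof (rule finite_subset)
  show "box_parts k n \<subseteq> {xs. set xs \<subseteq> {..n-k} \<and> length xs = k}" unfolding box_parts_def by auto
  show "finite {xs. set xs \<subseteq> {..n-k} \<and> length xs = k}" by (rule finite_lists_length_eq) simp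
qed

lemma row_formula:
  fixes w :: "nat list \<Rightarrow> 'a::real_algebra_1"
  assumes mu: "mu \<in> box_parts k n" and k1: "1 \<le> k" and kn: "k < n"
  shows "(\<Sum>l\<in>box_parts k n. of_real (c1_coeff k n mu l) * w l)
     = of_nat n * ((\<Sum>j\<in>Vset k mu. w (dec mu j)) + (if SV k n mu then w (lst k n mu) else 0))"
proof -
  let ?S = "box_parts k n"
  let ?P1 = "\<lambda>l. star_exists k n l \<and> star l = mu"
  let ?P2 = "\<lambda>l. sum_list mu = sum_list l + 1 \<and> list_all2 (\<le>) l mu"
  have muk: "length mu = k" using mu unfolding bp_iff by auto
  have "(\<Sum>l\<in>?S. of_real (c1_coeff k n mu l) * w l)
      = (\<Sum>l\<in>?S. (if ?P1 l then of_nat n * w l else 0)) + (\<Sum>l\<in>?S. (if ?P2 l then of_nat n * w l else 0))"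
    unfolding sum.distrib[symmetric] c1_coeff_def by (intro sum.cong refl) (auto simp: distrib_right)
  also have "(\<Sum>l\<in>?S. (if ?P1 l then of_nat n * w l else 0)) = (\<Sum>l\<in>{l\<in>?S. ?P1 l}. of_nat n * w l)"
    by (rule sum.inter_filter[symmetric]) (rule finite_bp)
  also have "\<dots> = of_nat n * (if SV k n mu then w (lst k n mu) else 0)"
    unfolding star_preds[OF mu k1 kn] by simp
  also have "(\<Sum>l\<in>?S. (if ?P2 l then of_nat n * w l else 0)) = (\<Sum>l\<in>{l\<in>?S. ?P2 l}. of_nat n * w l)"
    by (rule sum.inter_filter[symmetric]) (rule finite_bp)
  also have "\<dots> = (\<Sum>l\<in>dec mu ` Vset k mu. of_nat n * w l)"
    unfolding box_preds[OF mu] ..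
  also have "\<dots> = (\<Sum>j\<in>Vset k mu. of_nat n * w (dec mu j))"
    by (rule sum.reindex[OF dec_inj[OF muk], unfolded comp_def])
  finally show ?thesis by (simp add: sum_distrib_left distrib_left add.commute)
qed



definition alt :: "nat \<Rightarrow> (nat \<Rightarrow> complex) \<Rightarrow> (nat \<Rightarrow> int) \<Rightarrow> complex" where
  "alt k Y f = det (mat k k (\<lambda>(a,j). Y a powi f j))"

lemma alt_leibniz: "alt k Y f = (\<Sum>p \<in> {p. p permutes {0..<k}}. of_int (sign p) * (\<Prod>i = 0..<k. Y i powi f (p i)))"
  unfolding alt_def by (subst det_def'[of _ k]) auto

lemma alt_cong: "(\<And>j. j < k \<Longrightarrow> f j = g j) \<Longrightarrow> alt k Y f = alt k Y g"
  unfolding alt_def by (intro arg_cong[where f=det] eq_matI) auto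

lemma alt_trace:
  assumes Y0: "\<And>a. a < k \<Longrightarrow> Y a \<noteq> 0"
  shows "(\<Sum>j<k. alt k Y (f(j := f j - 1))) = (\<Sum>a<k. inverse (Y a)) * alt k Y f"
proof -
  let ?P = "{p. p permutes {0..<k}}"
  have inner: "(\<Sum>j<k. \<Prod>i = 0..<k. Y i powi (f(j := f j - 1)) (p i)) = (\<Sum>a<k. inverse (Y a)) * (\<Prod>i = 0..<k. Y i powi f (p i))"
    if p: "p permutes {0..<k}" for p
  proof -
    have "(\<Prod>i = 0..<k. Y i powi (f(j := f j - 1)) (p i)) = (\<Prod>i = 0..<k. Y i powi f (p i)) * inverse (Y (Hilbert_Choice.inv p j))"
      if j: "j < k" for j
    proof -
      have "(\<Prod>i = 0..<k. Y i powi (f(j := f j - 1)) (p i)) = (\<Prod>i = 0..<k. Y i powi f (p i) * (if i = Hilbert_Choice.inv p j then inverse (Y i) else 1))"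
      proof (intro prod.cong refl)
        fix i assume i: "i \<in> {0..<k}"
        have pi_eq: "(p i = j) = (i = Hilbert_Choice.inv p j)" using permutes_inverses[OF p] by metis
        show "Y i powi (f(j := f j - 1)) (p i) = Y i powi f (p i) * (if i = Hilbert_Choice.inv p j then inverse (Y i) else 1)"
        proof (cases "p i = j")
          case True
          have "Y i powi (f j - 1) = Y i powi f j / Y i powi 1" using Y0 i by (intro power_int_diff) auto
          thus ?thesis using True pi_eq by (simp add: field_simps)
        qed (use pi_eq in auto)
      qed
      also have "\<dots> = (\<Prod>i = 0..<k. Y i powi f (p i)) * (\<Prod>i = 0..<k. (if i = Hilbert_Choice.inv p j then inverse (Y i) else 1))"
        by (rule prod.distrib)
      also have "(\<Prod>i = 0..<k. (if i = Hilbert_Choice.inv p j then inverse (Y i) else 1)) = inverse (Y (Hilbert_Choice.inv p j))"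
        using permutes_in_image[OF permutes_inv[OF p], of j] j by (subst prod.delta) auto
      finally show ?thesis .
    qed
    hence "(\<Sum>j<k. \<Prod>i = 0..<k. Y i powi (f(j := f j - 1)) (p i)) = (\<Sum>j<k. (\<Prod>i = 0..<k. Y i powi f (p i)) * inverse (Y (Hilbert_Choice.inv p j)))"
      by (intro sum.cong refl) auto
    also have "\<dots> = (\<Prod>i = 0..<k. Y i powi f (p i)) * (\<Sum>j\<in>{0..<k}. inverse (Y (Hilbert_Choice.inv p j)))"
      by (simp add: sum_distrib_left atLeast0LessThan)
    also have "(\<Sum>j\<in>{0..<k}. inverse (Y (Hilbert_Choice.inv p j))) = (\<Sum>a\<in>{0..<k}. inverse (Y a))"
      using sum.permute[OF permutes_inv[OF p], of "\<lambda>a. inverse (Y a)"] by (simp add: comp_def)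
    finally show ?thesis by (simp add: atLeast0LessThan mult.commute)
  qed
  have "(\<Sum>j<k. alt k Y (f(j := f j - 1))) = (\<Sum>p\<in>?P. \<Sum>j<k. of_int (sign p) * (\<Prod>i = 0..<k. Y i powi (f(j := f j - 1)) (p i)))"
    unfolding alt_leibniz by (rule sum.swap)
  also have "\<dots> = (\<Sum>p\<in>?P. of_int (sign p) * ((\<Sum>a<k. inverse (Y a)) * (\<Prod>i = 0..<k. Y i powi f (p i))))"
  proof (intro sum.cong refl)
    fix p assume "p \<in> ?P"
    hence p: "p permutes {0..<k}" by simp
    have "(\<Sum>j<k. of_int (sign p) * (\<Prod>i = 0..<k. Y i powi (f(j := f j - 1)) (p i)))
        = of_int (sign p) * (\<Sum>j<k. (\<Prod>i = 0..<k. Y i powi (f(j := f j - 1)) (p i)))"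
      by (rule sum_distrib_left[symmetric])
    also have "\<dots> = of_int (sign p) * ((\<Sum>a<k. inverse (Y a)) * (\<Prod>i = 0..<k. Y i powi f (p i)))"
      unfolding inner[OF p] ..
    finally show "(\<Sum>j<k. of_int (sign p) * (\<Prod>i = 0..<k. Y i powi (f(j := f j - 1)) (p i)))
        = of_int (sign p) * ((\<Sum>a<k. inverse (Y a)) * (\<Prod>i = 0..<k. Y i powi f (p i)))" .
  qed
  also have "\<dots> = (\<Sum>a<k. inverse (Y a)) * alt k Y f"
    unfolding alt_leibniz sum_distrib_left by (intro sum.cong refl) (simp add: ac_simps)
  finally show ?thesis .
qed

lemma alt_zero:
  assumes "i \<noteq> j" "i < k" "j < k" "f i = f j"
  shows "alt k Y f = 0"
  unfolding alt_def
  by (rule det_identical_columns[of _ k i j]) (use assms in \<open>auto intro!: eq_vecI\<close>)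

lemma det_colscale:
  fixes g :: "nat \<Rightarrow> 'a::comm_ring_1"
  shows "det (mat k k (\<lambda>(a,j). g j * B a j)) = (\<Prod>j<k. g j) * det (mat k k (\<lambda>(a,j). B a j))"
proof -
  have "det (mat k k (\<lambda>(a,j). g j * B a j)) = (\<Sum>p \<in> {p. p permutes {0..<k}}. of_int (sign p) * (\<Prod>i = 0..<k. g (p i) * B i (p i)))"
    by (subst det_def'[of _ k]) auto
  also have "\<dots> = (\<Sum>p \<in> {p. p permutes {0..<k}}. (\<Prod>j<k. g j) * (of_int (sign p) * (\<Prod>i = 0..<k. B i (p i))))"
  proof (intro sum.cong refl)
    fix p assume "p \<in> {p. p permutes {0..<k}}"
    hence p: "p permutes {0..<k}" by simp
    have "(\<Prod>i = 0..<k. g (p i) * B i (p i)) = (\<Prod>i = 0..<k. g (p i)) * (\<Prod>i = 0..<k. B i (p i))"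
      by (rule prod.distrib)
    also have "(\<Prod>i = 0..<k. g (p i)) = (\<Prod>j<k. g j)"
      using prod.permute[OF p, of g] by (simp add: comp_def atLeast0LessThan)
    finally show "of_int (sign p) * (\<Prod>i = 0..<k. g (p i) * B i (p i)) = (\<Prod>j<k. g j) * (of_int (sign p) * (\<Prod>i = 0..<k. B i (p i)))"
      by (simp add: ac_simps)
  qed
  also have "\<dots> = (\<Prod>j<k. g j) * det (mat k k (\<lambda>(a,j). B a j))"
    by (subst det_def'[of _ k]) (auto simp: sum_distrib_left)
  finally show ?thesis .
qed

lemma alt_rotate:
  assumes k1: "1 \<le> k"
  shows "alt k Y h = (-1)^(k-1) * alt k Y (\<lambda>j. if j = 0 then h (k-1) else h (j - 1))"
proof -
  have kk: "k = 1 + (k - 1)" using k1 by simp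
  have A: "mat k k (\<lambda>(a,j). Y a powi h j) \<in> carrier_mat (1 + (k-1)) (1 + (k-1))" using kk by simp
  have "alt k Y h = (-1)^(1 * (k-1)) * det (mat (1 + (k-1)) (1 + (k-1)) (\<lambda>(i,j). (mat k k (\<lambda>(a,j). Y a powi h j)) $$ (i, if j < 1 then j + (k-1) else j - 1)))"
    unfolding alt_def by (rule det_swap_cols[OF A])
  also have "mat (1 + (k-1)) (1 + (k-1)) (\<lambda>(i,j). (mat k k (\<lambda>(a,j). Y a powi h j)) $$ (i, if j < 1 then j + (k-1) else j - 1))
      = mat k k (\<lambda>(a,j). Y a powi (\<lambda>j. if j = 0 then h (k-1) else h (j - 1)) j)"
    using kk by (intro eq_matI) auto
  finally show ?thesis unfolding alt_def by simp
qed

lemma vandermonde_nz: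
  fixes Y :: "nat \<Rightarrow> complex"
  assumes inj: "inj_on Y {..<k}" and k1: "1 \<le> k"
  shows "det (mat k k (\<lambda>(a,j). Y a ^ (k-1-j))) \<noteq> 0"
proof
  let ?M = "mat k k (\<lambda>(a,j). Y a ^ (k-1-j))"
  assume "det ?M = 0"
  then obtain v where v: "v \<in> carrier_vec k" "v \<noteq> 0\<^sub>v k" "?M *\<^sub>v v = 0\<^sub>v k"
    using det_0_iff_vec_prod_zero_field[of ?M k] by auto
  define p where "p = (\<Sum>j<k. monom (v $ j) (k-1-j))"
  have root: "poly p (Y a) = 0" if a: "a < k" for a
  proof -
    have "(?M *\<^sub>v v) $ a = 0" using v(3) a by simp
    hence "(\<Sum>j = 0..<k. Y a ^ (k-1-j) * v $ j) = 0" using a v(1) by (simp add: scalar_prod_def)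
    thus ?thesis unfolding p_def by (simp add: poly_sum poly_monom atLeast0LessThan mult.commute)
  qed
  obtain j where j: "j < k" "v $ j \<noteq> 0" using v(1,2) by (metis eq_vecI carrier_vecD index_zero_vec(1,2))
  have cf: "coeff p (k-1-j) = v $ j"
  proof -
    have "coeff p (k-1-j) = (\<Sum>j'<k. if k-1-j' = k-1-j then v $ j' else 0)"
      unfolding p_def coeff_sum by (simp add: coeff_monom)
    also have "\<dots> = (\<Sum>j'<k. if j' = j then v $ j' else 0)"
      using j by (intro sum.cong refl) auto
    also have "\<dots> = v $ j" using j by simp
    finally show ?thesis .
  qed
  hence p0: "p \<noteq> 0" using j by auto
  have deg: "degree p \<le> k - 1" unfolding p_def
    by (rule degree_sum_le) (auto intro: order.trans[OF degree_monom_le])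
  have "Y ` {..<k} \<subseteq> {x. poly p x = 0}" using root by auto
  hence "card (Y ` {..<k}) \<le> card {x. poly p x = 0}"
    by (intro card_mono poly_roots_finite p0)
  also have "\<dots> \<le> degree p" by (rule poly_roots_degree[OF p0])
  finally have "k \<le> k - 1" using card_image[OF inj] deg by simp
  thus False using k1 by simp
qed



lemma cos_lb: "1 - x^2/2 \<le> cos (x::real)"
proof -
  have c: "cos x = 1 - 2 * sin (x/2) ^ 2" using cos_double_sin[of "x/2"] by simp
  have "\<bar>sin (x/2)\<bar> \<le> \<bar>x/2\<bar>" by (rule abs_sin_x_le_abs_x)
  hence "sin (x/2) ^ 2 \<le> (x/2)^2"
    by (metis abs_ge_zero power2_abs power_mono)
  thus ?thesis unfolding c by (simp add: power_divide)
qed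

lemma sum_sq: "(\<Sum>a<m. (c - 2 * real a)^2) = real m*c^2 - 2*c*real m*(real m-1) + 2*(real m-1)*real m*(2*real m-1)/3"
proof (induction m)
  case (Suc m)
  show ?case unfolding sum.lessThan_Suc Suc.IH by (simp add: power2_eq_square field_simps)
qed simp

lemma cos_sum_closed: "sin t * (\<Sum>a<k. cos ((real k - 1 - 2*real a) * t)) = sin (real k * t)"
proof -
  define g where "g a = sin ((real k - 2 * real a) * t)" for a
  have "2 * (sin t * (\<Sum>a<k. cos ((real k - 1 - 2*real a) * t))) = (\<Sum>a<k. g a - g (Suc a))"
    unfolding sum_distrib_left
  proof (rule sum.cong[OF refl])
    fix a
    have "2 * (sin t * cos ((real k - 1 - 2*real a) * t)) =
       sin (t + (real k - 1 - 2*real a) * t) + sin (t - (real k - 1 - 2*real a) * t)"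
      by (simp add: sin_add sin_diff)
    also have "sin (t + (real k - 1 - 2*real a) * t) = g a" unfolding g_def by (simp add: algebra_simps)
    also have "sin (t - (real k - 1 - 2*real a) * t) = - g (Suc a)"
    proof -
      have "t - (real k - 1 - 2*real a) * t = - ((real k - 2 * real (Suc a)) * t)" by (simp add: algebra_simps)
      thus ?thesis by (simp add: g_def)
    qed
    finally show "2 * (sin t * cos ((real k - 1 - 2*real a) * t)) = g a - g (Suc a)" by simp
  qed
  also have "\<dots> = g 0 - g k" by (rule sum_lessThan_telescope')
  also have "\<dots> = 2 * sin (real k * t)" unfolding g_def by (simp add: algebra_simps)
  finally show ?thesis by simp
qed

lemma trig_half:
  assumes m1: "1 \<le> m" and mn: "2 * m \<le> n"
  shows "real (m*(n-m)) + 1 \<le> real n * (\<Sum>a<m. cos ((real m - 1 - 2*real a) * (pi / real n)))"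
    and "2 \<le> m \<Longrightarrow> real (m*(n-m)) + 1 < real n * (\<Sum>a<m. cos ((real m - 1 - 2*real a) * (pi / real n)))"
proof -
  define t where "t = pi / real n"
  have n0: "real n > 0" using m1 mn by simp
  have "(\<Sum>a<m. cos ((real m - 1 - 2*real a) * t)) \<ge> (\<Sum>a<m. 1 - ((real m - 1 - 2*real a) * t)^2/2)"
    by (rule sum_mono) (rule cos_lb)
  also have "(\<Sum>a<m. 1 - ((real m - 1 - 2*real a) * t)^2/2) = real m - t^2/2 * (\<Sum>a<m. (real m - 1 - 2*real a)^2)"
  proof -
    have "(\<Sum>a<m. 1 - ((real m - 1 - 2*real a) * t)^2/2) = (\<Sum>a<m. 1 - t^2/2 * (real m - 1 - 2*real a)^2)"
      by (intro sum.cong refl) (simp add: power_mult_distrib)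
    also have "\<dots> = real m - t^2/2 * (\<Sum>a<m. (real m - 1 - 2*real a)^2)"
      by (simp add: sum_subtractf sum_distrib_left)
    finally show ?thesis .
  qed
  also have "(\<Sum>a<m. (real m - 1 - 2*real a)^2) = real m * (real m ^ 2 - 1) / 3"
  proof -
    have "(\<Sum>a<m. (real m - 1 - 2*real a)^2) = real m*(real m - 1)^2 - 2*(real m - 1)*real m*(real m-1) + 2*(real m-1)*real m*(2*real m-1)/3" by (rule sum_sq)
    also have "\<dots> = real m * (real m^2-1)/3" by (simp add: power2_eq_square field_simps)
    finally show ?thesis .
  qed
  finally have F: "(\<Sum>a<m. cos ((real m - 1 - 2*real a) * t)) \<ge> real m - t^2/2 * (real m * (real m ^ 2 - 1) / 3)" .
  have pi2: "pi^2 < 12"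
  proof -
    have p: "pi < 3.2" using pi_approx(2) by simp
    have "pi * pi < 3.2 * 3.2" by (rule mult_strict_mono[OF p p]) auto
    thus ?thesis by (simp add: power2_eq_square)
  qed
  have mm: "real m * 2 \<le> real n" using mn by linarith
  have key: "pi^2 * real m < 6 * real n"
  proof -
    have "pi^2 * real m \<le> 12 * real m" using pi2 by (intro mult_right_mono) auto
    also have "\<dots> \<le> 6 * real n" using mm by linarith
    finally have "pi^2 * real m \<le> 6 * real n" .
    moreover have "pi^2 * real m < 12 * real m" using pi2 m1 by (intro mult_strict_right_mono) auto
    ultimately show ?thesis using mm by linarith
  qed
  have sq0: "real m ^ 2 - 1 \<ge> 0"
  proof -
    have "1 \<le> real m" using m1 by simp
    hence "1 \<le> real m ^ 2" by (rule one_le_power)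
    thus ?thesis by simp
  qed
  have eq: "real n * (real m - t^2/2 * (real m * (real m ^ 2 - 1) / 3))
        = real (m*(n-m)) + 1 + (real m ^ 2 - 1) * (1 - pi^2 * real m / (6 * real n))"
    using n0 mn unfolding t_def by (simp add: of_nat_diff power2_eq_square field_simps)
  have r0: "1 - pi^2 * real m / (6 * real n) > 0" using key n0 by (simp add: field_simps)
  have lb: "real n * (\<Sum>a<m. cos ((real m - 1 - 2*real a) * t)) \<ge> real n * (real m - t^2/2 * (real m * (real m ^ 2 - 1) / 3))"
    using F n0 by (intro mult_left_mono) auto
  show "real (m*(n-m)) + 1 \<le> real n * (\<Sum>a<m. cos ((real m - 1 - 2*real a) * (pi / real n)))"
  proof -
    have "0 \<le> (real m ^ 2 - 1) * (1 - pi^2 * real m / (6 * real n))" using sq0 r0 by simp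
    thus ?thesis using lb eq unfolding t_def by linarith
  qed
  assume "2 \<le> m"
  hence "(2::real) ^ 2 \<le> real m ^ 2" by (intro power_mono) auto
  hence "real m ^ 2 - 1 > 0" by simp
  then show "real (m*(n-m)) + 1 < real n * (\<Sum>a<m. cos ((real m - 1 - 2*real a) * (pi / real n)))"
  proof -
    have "0 < (real m ^ 2 - 1) * (1 - pi^2 * real m / (6 * real n))" using \<open>real m ^ 2 - 1 > 0\<close> r0 by simp
    thus ?thesis using lb eq unfolding t_def by linarith
  qed
qed

lemma trig_main:
  assumes k1: "1 \<le> k" and kn: "k < n"
  shows "real (k*(n-k)) + 1 \<le> real n * (\<Sum>a<k. cos ((real k - 1 - 2*real a) * (pi / real n)))"
    and "2 \<le> k \<Longrightarrow> k + 2 \<le> n \<Longrightarrow> real (k*(n-k)) + 1 < real n * (\<Sum>a<k. cos ((real k - 1 - 2*real a) * (pi / real n)))"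
proof -
  define F where "F j = (\<Sum>a<j. cos ((real j - 1 - 2*real a) * (pi / real n)))" for j
  have n2: "real n \<ge> 2" using k1 kn by linarith
  have st: "sin (pi / real n) > 0" using n2 by (intro sin_gt_zero) (auto simp: field_simps)
  have FF: "F j = sin (real j * (pi / real n)) / sin (pi / real n)" for j
    using cos_sum_closed[of "pi / real n" j] st unfolding F_def by (simp add: field_simps)
  have sym: "F (n - k) = F k"
  proof -
    have "real (n-k) * (pi / real n) = pi - real k * (pi / real n)" using kn n2 by (simp add: of_nat_diff field_simps)
    thus ?thesis unfolding FF by simp
  qed
  have "real (k*(n-k)) + 1 \<le> real n * F k \<and> (2 \<le> k \<longrightarrow> k + 2 \<le> n \<longrightarrow> real (k*(n-k)) + 1 < real n * F k)"
  proof (cases "2 * k \<le> n")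
    case True
    then show ?thesis using trig_half[OF k1 True] unfolding F_def by auto
  next
    case False
    define m where "m = n - k"
    have m1: "1 \<le> m" and mn: "2 * m \<le> n" using kn False unfolding m_def by auto
    have e: "m * (n - m) = k * (n - k)" unfolding m_def using kn by (simp add: mult.commute)
    show ?thesis using trig_half[OF m1 mn] sym unfolding F_def[symmetric] e m_def[symmetric] using kn unfolding m_def
      by auto
  qed
  thus "real (k*(n-k)) + 1 \<le> real n * (\<Sum>a<k. cos ((real k - 1 - 2*real a) * (pi / real n)))"
    and "2 \<le> k \<Longrightarrow> k + 2 \<le> n \<Longrightarrow> real (k*(n-k)) + 1 < real n * (\<Sum>a<k. cos ((real k - 1 - 2*real a) * (pi / real n)))"
    unfolding F_def by auto
qed


definition theta :: "nat \<Rightarrow> nat \<Rightarrow> nat \<Rightarrow> real" where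
  "theta k n a = (real k - 1 - 2*real a) * (pi / real n)"
definition Yr :: "nat \<Rightarrow> nat \<Rightarrow> nat \<Rightarrow> complex" where
  "Yr k n a = cis (theta k n a)"
definition ex :: "nat \<Rightarrow> nat list \<Rightarrow> nat \<Rightarrow> int" where
  "ex k mu j = int (mu!j) + int (k-1-j)"
definition wv :: "nat \<Rightarrow> nat \<Rightarrow> nat list \<Rightarrow> complex" where
  "wv k n mu = alt k (Yr k n) (ex k mu)"

lemma Yr_nz: "Yr k n a \<noteq> 0" unfolding Yr_def by simp

lemma cis_npi: "cis (real m * pi) = (-1)^m"
proof -
  have "(-1::complex)^m = complex_of_real ((-1)^m)" by simp
  thus ?thesis by (simp add: complex_eq_iff cos_npi sin_npi)
qed

lemma Yr_pow: assumes "0 < n" "1 \<le> k" shows "Yr k n a ^ n = (-1)^(k-1)"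
proof -
  have "Yr k n a ^ n = cis (real n * theta k n a)" unfolding Yr_def by (rule Complex.DeMoivre)
  also have "real n * theta k n a = real (k-1) * pi - real (2*a) * pi"
    unfolding theta_def using assms by (simp add: of_nat_diff field_simps)
  also have "cis (real (k-1) * pi - real (2*a) * pi) = cis (real (k-1) * pi) * inverse (cis (real (2*a) * pi))"
    using cis_mult[of "real (k-1) * pi" "- (real (2*a) * pi)"] by (simp add: cis_inverse)
  also have "\<dots> = (-1)^(k-1)" unfolding cis_npi by simp
  finally show ?thesis .
qed

lemma Yr_inj: assumes kn: "k < n" shows "inj_on (Yr k n) {..<k}"
proof (rule inj_onI)
  fix a b assume a: "a \<in> {..<k}" and b: "b \<in> {..<k}" and e: "Yr k n a = Yr k n b"
  have n0: "real n > 0" using kn by simp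
  have "cis (theta k n a - theta k n b) = cis (theta k n a) * inverse (cis (theta k n b))"
    using cis_mult[of "theta k n a" "- theta k n b"] by (simp add: cis_inverse)
  also have "\<dots> = 1" using e unfolding Yr_def by (simp add: cis_mult)
  finally have "Re (cis (theta k n a - theta k n b)) = 1" by simp
  hence "cos (theta k n a - theta k n b) = 1" by simp
  then obtain m :: int where m: "theta k n a - theta k n b = real_of_int m * 2 * pi" using cos_one_2pi_int by blast
  have "theta k n a - theta k n b = (real b - real a) * 2 * pi / real n" unfolding theta_def using n0 by (simp add: field_simps)
  with m have "(real b - real a) * (2 * pi) = (real_of_int m * real n) * (2 * pi)" using n0 by (simp add: field_simps)
  hence "(real b - real a) = real_of_int m * real n" by (subst (asm) mult_right_cancel) auto
  moreover have "\<bar>real b - real a\<bar> < real n" using a b kn by auto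
  ultimately have "\<bar>real_of_int m\<bar> * real n < 1 * real n" by (simp add: abs_mult)
  hence "\<bar>real_of_int m\<bar> < 1" using n0 by (simp only: mult_less_cancel_right)
  hence "m = 0" by linarith
  thus "a = b" using \<open>real b - real a = real_of_int m * real n\<close> by simp
qed

lemma Yr_sum: assumes "0 < n" shows "(\<Sum>a<k. inverse (Yr k n a)) = complex_of_real (\<Sum>a<k. cos (theta k n a))"
proof -
  have sym: "theta k n (k - Suc a) = - theta k n a" if "a < k" for a
  proof -
    have "real (k - Suc a) = real k - 1 - real a" using that by (simp add: of_nat_diff)
    thus ?thesis unfolding theta_def by (simp add: algebra_simps)
  qed
  have s0: "(\<Sum>a<k. sin (theta k n a)) = 0"
  proof -
    have "(\<Sum>a<k. sin (theta k n a)) = (\<Sum>a<k. sin (theta k n (k - Suc a)))"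
      by (rule sum.nat_diff_reindex[symmetric])
    also have "\<dots> = - (\<Sum>a<k. sin (theta k n a))"
      by (simp add: sym sum_negf[symmetric])
    finally show ?thesis by simp
  qed
  have "(\<Sum>a<k. inverse (Yr k n a)) = (\<Sum>a<k. complex_of_real (cos (theta k n a)) - \<i> * complex_of_real (sin (theta k n a)))"
    unfolding Yr_def by (intro sum.cong refl) (simp add: cis_inverse complex_eq_iff)
  also have "\<dots> = complex_of_real (\<Sum>a<k. cos (theta k n a)) - \<i> * complex_of_real (\<Sum>a<k. sin (theta k n a))"
    by (simp add: sum_subtractf sum_distrib_left)
  finally show ?thesis using s0 by simp
qed


lemma powi_m1: "(y::complex) \<noteq> 0 \<Longrightarrow> y powi (-1) = inverse y"
  using power_int_diff[of y 0 1] by (simp add: field_simps)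

lemma eig:
  assumes mu: "mu \<in> box_parts k n" and k1: "1 \<le> k" and kn: "k < n"
  shows "(\<Sum>l\<in>box_parts k n. of_real (c1_coeff k n mu l) * wv k n l)
       = complex_of_real (real n * (\<Sum>a<k. cos (theta k n a))) * wv k n mu"
proof -
  let ?Y = "Yr k n"
  let ?c = "(-1::complex)^(k-1)"
  have muk: "length mu = k" using mu unfolding bp_iff by auto
  have n0: "0 < n" using kn by simp
  have cc: "?c * ?c = 1" by (simp add: power_mult_distrib[symmetric])
  define g where "g j = (ex k mu)(j := ex k mu j - 1)" for j
  have T1: "alt k ?Y (g j) = wv k n (dec mu j)" if j: "j \<in> Vset k mu" for j
  proof -
    have jk: "j < k" and m1: "1 \<le> mu!j" using j unfolding Vset_def by auto
    show ?thesis unfolding wv_def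
    proof (rule alt_cong)
      fix i assume "i < k"
      show "g j i = ex k (dec mu j) i"
        unfolding g_def ex_def dec_def using jk muk m1 by (auto simp: of_nat_diff)
    qed
  qed
  have T2: "alt k ?Y (g j) = 0" if j: "j < k" "j \<notin> Vset k mu" "Suc j < k" for j
  proof (rule alt_zero[of j "Suc j"])
    have le: "mu!(Suc j) \<le> mu!j" using bp_mono[OF mu, of j "Suc j"] j by auto
    have alt: "mu!j = 0 \<or> mu!(Suc j) = mu!j" using j le unfolding Vset_def by auto
    have kk: "int (k-1-j) = int (k-1-Suc j) + 1" using j by simp
    show "g j j = g j (Suc j)" unfolding g_def ex_def using alt le kk by auto
  qed (use j in auto)
  have T3: "alt k ?Y (g (k-1)) = (if SV k n mu then wv k n (lst k n mu) else 0)" if z: "mu!(k-1) = 0"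
  proof -
    define h where "h = (ex k mu)(k-1 := int (n-1))"
    have gk: "g (k-1) (k-1) = -1" unfolding g_def ex_def using z by simp
    have inv_eq: "inverse (?Y a) = ?c * ?Y a ^ (n-1)" for a
    proof -
      have "?Y a * ?Y a ^ (n-1) = ?Y a ^ n" using n0 by (metis Suc_diff_1 power_Suc)
      also have "\<dots> = ?c" by (rule Yr_pow[OF n0 k1])
      finally have "?Y a * ?Y a ^ (n-1) = ?c" .
      moreover have "?c * ?Y a ^ (n-1) * ?Y a = ?c * (?Y a * ?Y a ^ (n-1))" by (metis mult.assoc mult.commute)
      ultimately have "?c * ?Y a ^ (n-1) * ?Y a = ?c * ?c" by simp
      hence "?c * ?Y a ^ (n-1) * ?Y a = 1" using cc by simp
      thus ?thesis using Yr_nz by (metis inverse_unique mult.commute)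
    qed
    have "alt k ?Y (g (k-1)) = det (Matrix.mat k k (\<lambda>(a,j). (if j = k-1 then ?c else 1) * ?Y a powi h j))"
      unfolding alt_def
    proof (intro arg_cong[where f=det] eq_matI)
      fix a j assume a: "a < dim_row (Matrix.mat k k (\<lambda>(a,j). (if j = k-1 then ?c else 1) * ?Y a powi h j))"
        and j: "j < dim_col (Matrix.mat k k (\<lambda>(a,j). (if j = k-1 then ?c else 1) * ?Y a powi h j))"
      show "Matrix.mat k k (\<lambda>(a, j). ?Y a powi g (k - 1) j) $$ (a, j) = Matrix.mat k k (\<lambda>(a,j). (if j = k-1 then ?c else 1) * ?Y a powi h j) $$ (a, j)"
      proof (cases "j = k-1")
        case True
        thus ?thesis using a j gk inv_eq[of a] powi_m1[OF Yr_nz] unfolding h_def by (simp add: power_int_of_nat)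
      next
        case False
        thus ?thesis using a j unfolding h_def g_def by simp
      qed
    qed auto
    also have "\<dots> = (\<Prod>j<k. (if j = k-1 then ?c else 1)) * alt k ?Y h"
      unfolding alt_def by (rule det_colscale)
    also have "(\<Prod>j<k. (if j = k-1 then ?c else 1)) = ?c" using k1 by (subst prod.delta) auto
    finally have e1: "alt k ?Y (g (k-1)) = ?c * alt k ?Y h" .
    have e2: "alt k ?Y h = ?c * alt k ?Y (\<lambda>j. if j = 0 then h (k-1) else h (j - 1))"
      by (rule alt_rotate[OF k1])
    show ?thesis
    proof (cases "SV k n mu")
      case True
      have "alt k ?Y (\<lambda>j. if j = 0 then h (k-1) else h (j - 1)) = wv k n (lst k n mu)"
        unfolding wv_def
      proof (rule alt_cong)
        fix j assume j: "j < k"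
        show "(if j = 0 then h (k-1) else h (j - 1)) = ex k (lst k n mu) j"
        proof (cases "j = 0")
          case True thus ?thesis unfolding h_def ex_def using lst_nth[OF muk j] kn k1 by simp
        next
          case False
          hence "j - 1 \<noteq> k - 1" using j by simp
          thus ?thesis unfolding h_def ex_def using lst_nth[OF muk j] False j by (simp add: of_nat_diff)
        qed
      qed
      thus ?thesis using e1 e2 True cc by (simp add: mult.assoc[symmetric])
    next
      case False
      have m0: "mu!0 = n - k" using False z bp_iff mu k1 unfolding SV_def by force
      have k2: "k \<noteq> 1" using m0 z kn by auto
      have "alt k ?Y h = 0"
        by (rule alt_zero[of 0 "k-1"]) (use k1 k2 m0 kn in \<open>auto simp: h_def ex_def\<close>)
      thus ?thesis using e1 False by simp
    qed
  qed
  have sumT: "(\<Sum>j<k. alt k ?Y (g j)) = (\<Sum>j\<in>Vset k mu. wv k n (dec mu j)) + (if SV k n mu then wv k n (lst k n mu) else 0)"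
  proof -
    have sub: "Vset k mu \<subseteq> {..<k}" unfolding Vset_def by auto
    have "(\<Sum>j<k. alt k ?Y (g j)) = (\<Sum>j\<in>{..<k} - Vset k mu. alt k ?Y (g j)) + (\<Sum>j\<in>Vset k mu. alt k ?Y (g j))"
      by (rule sum.subset_diff[OF sub]) simp
    also have "(\<Sum>j\<in>Vset k mu. alt k ?Y (g j)) = (\<Sum>j\<in>Vset k mu. wv k n (dec mu j))"
      by (intro sum.cong refl T1)
    also have "(\<Sum>j\<in>{..<k} - Vset k mu. alt k ?Y (g j)) = (if SV k n mu then wv k n (lst k n mu) else 0)"
    proof (cases "mu!(k-1) = 0")
      case True
      have mem: "k - 1 \<in> {..<k} - Vset k mu" using True k1 unfolding Vset_def by auto
      have "(\<Sum>j\<in>{..<k} - Vset k mu. alt k ?Y (g j)) = alt k ?Y (g (k-1)) + (\<Sum>j\<in>{..<k} - Vset k mu - {k-1}. alt k ?Y (g j))"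
        by (rule sum.remove[OF _ mem]) simp
      also have "(\<Sum>j\<in>{..<k} - Vset k mu - {k-1}. alt k ?Y (g j)) = 0"
        by (rule sum.neutral) (auto intro!: T2)
      finally show ?thesis using T3[OF True] by simp
    next
      case False
      hence nsv: "\<not> SV k n mu" unfolding SV_def by auto
      have "(\<Sum>j\<in>{..<k} - Vset k mu. alt k ?Y (g j)) = 0"
      proof (rule sum.neutral, intro ballI)
        fix j assume j: "j \<in> {..<k} - Vset k mu"
        have "j \<noteq> k - 1" using j False unfolding Vset_def by auto
        hence "Suc j < k" using j by auto
        thus "alt k ?Y (g j) = 0" using j by (intro T2) auto
      qed
      thus ?thesis using nsv by simp
    qed
    finally show ?thesis by (simp add: add.commute)
  qed
  have "(\<Sum>l\<in>box_parts k n. of_real (c1_coeff k n mu l) * wv k n l)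
      = of_nat n * ((\<Sum>j\<in>Vset k mu. wv k n (dec mu j)) + (if SV k n mu then wv k n (lst k n mu) else 0))"
    by (rule row_formula[OF mu k1 kn])
  also have "\<dots> = of_nat n * (\<Sum>j<k. alt k ?Y (g j))" unfolding sumT ..
  also have "(\<Sum>j<k. alt k ?Y (g j)) = (\<Sum>a<k. inverse (?Y a)) * wv k n mu"
    unfolding g_def wv_def by (rule alt_trace) (rule Yr_nz)
  also have "(\<Sum>a<k. inverse (?Y a)) = complex_of_real (\<Sum>a<k. cos (theta k n a))" by (rule Yr_sum[OF n0])
  finally show ?thesis by (simp add: mult.assoc)
qed

lemma wv_nz:
  assumes k1: "1 \<le> k" and kn: "k < n"
  shows "wv k n (replicate k 0) \<noteq> 0"
proof -
  have "wv k n (replicate k 0) = det (Matrix.mat k k (\<lambda>(a,j). Yr k n a ^ (k-1-j)))"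
    unfolding wv_def alt_def
  proof (intro arg_cong[where f=det] eq_matI)
    fix a j assume a: "a < dim_row (Matrix.mat k k (\<lambda>(a,j). Yr k n a ^ (k-1-j)))"
      and j: "j < dim_col (Matrix.mat k k (\<lambda>(a,j). Yr k n a ^ (k-1-j)))"
    have e: "ex k (replicate k 0) j = int (k-1-j)" using j by (simp add: ex_def)
    have "Yr k n a powi ex k (replicate k 0) j = Yr k n a ^ (k-1-j)" by (simp only: e power_int_of_nat)
    thus "Matrix.mat k k (\<lambda>(a, j). Yr k n a powi ex k (replicate k 0) j) $$ (a, j) = Matrix.mat k k (\<lambda>(a,j). Yr k n a ^ (k-1-j)) $$ (a, j)"
      using a j by simp
  qed auto
  also have "\<dots> \<noteq> 0" by (rule vandermonde_nz[OF Yr_inj[OF kn] k1])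
  finally show ?thesis .
qed

lemma rep_in: "k \<le> n \<Longrightarrow> replicate k 0 \<in> box_parts k n"
  unfolding box_parts_def by (auto simp: sorted_wrt_iff_nth_less)

lemma d0_eigen:
  assumes k1: "1 \<le> k" and kn: "k < n"
  shows "c1_real_eigenvalue k n (real n * (\<Sum>a<k. cos (theta k n a)))"
proof -
  let ?d = "real n * (\<Sum>a<k. cos (theta k n a))"
  let ?w = "wv k n"
  let ?m0 = "replicate k 0"
  have m0: "?m0 \<in> box_parts k n" using kn by (intro rep_in) simp
  have E: "(\<Sum>l\<in>box_parts k n. c1_coeff k n mu l * f (?w l)) = ?d * f (?w mu)"
    if mu: "mu \<in> box_parts k n" and f: "f = Re \<or> f = Im" for mu f
  proof -
    have "f (\<Sum>l\<in>box_parts k n. of_real (c1_coeff k n mu l) * ?w l) = f (complex_of_real ?d * ?w mu)"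
      using eig[OF mu k1 kn] by simp
    thus ?thesis using f by (auto simp: Re_sum Im_sum)
  qed
  show ?thesis
  proof (cases "Re (?w ?m0) = 0")
    case True
    hence "Im (?w ?m0) \<noteq> 0" using wv_nz[OF k1 kn] complex_eq_iff by auto
    thus ?thesis unfolding c1_real_eigenvalue_def c1_hat_def
      by (intro exI[of _ "\<lambda>l. Im (?w l)"] conjI bexI[OF _ m0]) (auto intro: E)
  next
    case False
    thus ?thesis unfolding c1_real_eigenvalue_def c1_hat_def
      by (intro exI[of _ "\<lambda>l. Re (?w l)"] conjI bexI[OF _ m0]) (auto intro: E)
  qed
qed


lemma fin_eig: "finite {d. c1_real_eigenvalue k n d}"
proof -
  obtain es where es: "distinct es" "set es = box_parts k n" using finite_distinct_list[OF finite_bp] by blast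
  define N where "N = length es"
  define Am :: "real Matrix.mat" where "Am = Matrix.mat N N (\<lambda>(i,j). c1_coeff k n (es!i) (es!j))"
  have Am: "Am \<in> carrier_mat N N" unfolding Am_def by simp
  have sub: "{d. c1_real_eigenvalue k n d} \<subseteq> spectrum Am"
  proof
    fix d assume "d \<in> {d. c1_real_eigenvalue k n d}"
    then obtain v where nz: "\<exists>mu\<in>box_parts k n. v mu \<noteq> 0"
      and eq: "\<forall>mu\<in>box_parts k n. c1_hat k n v mu = d * v mu"
      unfolding c1_real_eigenvalue_def by auto
    define x where "x = Matrix.vec N (\<lambda>i. v (es!i))"
    have xc: "x \<in> carrier_vec N" unfolding x_def by simp
    have x0: "x \<noteq> 0\<^sub>v N"
    proof
      assume x0: "x = 0\<^sub>v N"
      obtain mu where mu: "mu \<in> box_parts k n" "v mu \<noteq> 0" using nz by auto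
      then obtain i where i: "i < N" "es!i = mu" using es(2) unfolding N_def by (metis in_set_conv_nth)
      have "x $ i = v mu" unfolding x_def using i by simp
      moreover have "x $ i = 0" using x0 i by simp
      ultimately show False using mu by simp
    qed
    have sumconv: "(\<Sum>j = 0..<N. f (es!j)) = (\<Sum>l\<in>box_parts k n. f l)" for f :: "nat list \<Rightarrow> real"
    proof -
      have "(\<Sum>j = 0..<N. f (es!j)) = sum_list (map f es)"
        unfolding N_def by (simp add: sum_list_sum_nth)
      also have "\<dots> = (\<Sum>l\<in>set es. f l)" by (rule sum_list_distinct_conv_sum_set[OF es(1)])
      finally show ?thesis using es(2) by simp
    qed
    have "Am *\<^sub>v x = d \<cdot>\<^sub>v x"
    proof (rule eq_vecI)
      show "dim_vec (Am *\<^sub>v x) = dim_vec (d \<cdot>\<^sub>v x)" using Am xc by simp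
      fix i assume "i < dim_vec (d \<cdot>\<^sub>v x)"
      hence i: "i < N" using xc by simp
      have esi: "es!i \<in> box_parts k n" using i es(2) unfolding N_def by (metis nth_mem)
      have "(Am *\<^sub>v x) $ i = (\<Sum>j = 0..<N. c1_coeff k n (es!i) (es!j) * v (es!j))"
        using i Am unfolding x_def Am_def by (simp add: scalar_prod_def)
      also have "\<dots> = c1_hat k n v (es!i)" unfolding c1_hat_def by (rule sumconv)
      also have "\<dots> = d * v (es!i)" using eq esi by simp
      also have "\<dots> = (d \<cdot>\<^sub>v x) $ i" unfolding x_def using i by simp
      finally show "(Am *\<^sub>v x) $ i = (d \<cdot>\<^sub>v x) $ i" .
    qed
    hence "eigenvector Am x d" unfolding eigenvector_def using xc x0 Am by simp
    thus "d \<in> spectrum Am" unfolding spectrum_def eigenvalue_def by auto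
  qed
  show ?thesis by (rule finite_subset[OF sub card_finite_spectrum(1)[OF Am]])
qed

lemma few_preds:
  assumes mu: "mu \<in> box_parts k n" and k1: "1 \<le> k" and kn: "k < n" and kk: "k = 1 \<or> k = n - 1"
  shows "Vset k mu = {} \<or> (\<exists>j. Vset k mu = {j} \<and> \<not> SV k n mu)"
proof -
  have uniq: "j = j'" if j: "j \<in> Vset k mu" and j': "j' \<in> Vset k mu" for j j'
  proof (rule ccontr)
    assume ne: "j \<noteq> j'"
    show False
    proof (cases "k = 1")
      case True thus False using j j' ne unfolding Vset_def by auto
    next
      case False
      hence nk: "n - k = 1" using kk kn by auto
      have bnd: "\<And>i. i < k \<Longrightarrow> mu!i \<le> 1" using mu nk unfolding bp_iff by auto
      have gen: False if a: "a \<in> Vset k mu" and b: "b \<in> Vset k mu" and ab: "a < b" for a b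
      proof -
        have "Suc a < k" using ab b unfolding Vset_def by auto
        hence "mu!(Suc a) < mu!a" using a unfolding Vset_def by auto
        moreover have "mu!a \<le> 1" using a bnd unfolding Vset_def by auto
        ultimately have "mu!(Suc a) = 0" by simp
        moreover have "mu!b \<le> mu!(Suc a)" using bp_mono[OF mu, of "Suc a" b] ab b unfolding Vset_def by auto
        moreover have "1 \<le> mu!b" using b unfolding Vset_def by auto
        ultimately show False by simp
      qed
      show False using ne gen[OF j j'] gen[OF j' j] by linarith
    qed
  qed
  show ?thesis
  proof (cases "Vset k mu = {}")
    case False
    then obtain j where j: "j \<in> Vset k mu" by auto
    hence V: "Vset k mu = {j}" using uniq by auto
    have "\<not> SV k n mu"
    proof
      assume sv: "SV k n mu"
      show False
      proof (cases "k = 1")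
        case True thus False using sv j unfolding SV_def Vset_def by auto
      next
        case False
        hence nk: "n - k = 1" using kk kn by auto
        have "mu!0 = 0" using sv nk unfolding SV_def by simp
        moreover have "mu!j \<le> mu!0" using bp_mono[OF mu, of 0 j] j unfolding Vset_def by auto
        moreover have "1 \<le> mu!j" using j unfolding Vset_def by auto
        ultimately show False by simp
      qed
    qed
    thus ?thesis using V by auto
  qed simp
qed

lemma ub:
  assumes k1: "1 \<le> k" and kn: "k < n" and kk: "k = 1 \<or> k = n - 1" and ev: "c1_real_eigenvalue k n d"
  shows "d \<le> real n"
proof -
  let ?S = "box_parts k n"
  obtain v where nz: "\<exists>mu\<in>?S. v mu \<noteq> 0" and eq: "\<forall>mu\<in>?S. c1_hat k n v mu = d * v mu"
    using ev unfolding c1_real_eigenvalue_def by auto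
  obtain mu1 where mu1: "mu1 \<in> ?S" "v mu1 \<noteq> 0" using nz by auto
  define M where "M = Max ((\<lambda>l. \<bar>v l\<bar>) ` ?S)"
  have fin: "finite ((\<lambda>l. \<bar>v l\<bar>) ` ?S)" using finite_bp by simp
  have le: "\<And>l. l \<in> ?S \<Longrightarrow> \<bar>v l\<bar> \<le> M" unfolding M_def using fin by (intro Max_ge) auto
  have "M \<in> (\<lambda>l. \<bar>v l\<bar>) ` ?S" unfolding M_def using fin mu1 by (intro Max_in) auto
  then obtain mu where mu: "mu \<in> ?S" "\<bar>v mu\<bar> = M" by auto
  have Mpos: "M > 0" using le[OF mu1(1)] mu1(2) by linarith
  define X where "X = (\<Sum>j\<in>Vset k mu. v (dec mu j)) + (if SV k n mu then v (lst k n mu) else 0)"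
  have "c1_hat k n v mu = (\<Sum>l\<in>?S. of_real (c1_coeff k n mu l) * v l)" unfolding c1_hat_def by simp
  also have "\<dots> = of_nat n * X" unfolding X_def by (rule row_formula[OF mu(1) k1 kn])
  finally have cx: "d * v mu = real n * X" using eq mu(1) by simp
  have decS: "dec mu j \<in> ?S" if "j \<in> Vset k mu" for j
    using box_preds[OF mu(1)] that by blast
  have lstS: "lst k n mu \<in> ?S" if "SV k n mu"
    using star_preds[OF mu(1) k1 kn] that by (metis (no_types, lifting) insertI1 mem_Collect_eq)
  have XM: "\<bar>X\<bar> \<le> M"
    using few_preds[OF mu(1) k1 kn kk]
  proof
    assume V: "Vset k mu = {}"
    show ?thesis unfolding X_def V using lstS le Mpos by (auto simp: less_imp_le)
  next
    assume "\<exists>j. Vset k mu = {j} \<and> \<not> SV k n mu"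
    then obtain j where V: "Vset k mu = {j}" and nsv: "\<not> SV k n mu" by auto
    show ?thesis unfolding X_def V using nsv le decS V by auto
  qed
  have "\<bar>d\<bar> * M = \<bar>d * v mu\<bar>" using mu(2) by (simp add: abs_mult)
  also have "\<dots> = real n * \<bar>X\<bar>" unfolding cx by (simp add: abs_mult)
  also have "\<dots> \<le> real n * M" using XM by (intro mult_left_mono) auto
  finally have "\<bar>d\<bar> \<le> real n" using Mpos by simp
  thus ?thesis by simp
qed

theorem theorem1p3:
  fixes k n :: nat
  assumes "1 \<le> k" and "k \<le> n - 1"
  shows "delta0 k n \<ge> real (k * (n - k)) + 1 \<and>
         (delta0 k n = real (k * (n - k)) + 1 \<longleftrightarrow> k = 1 \<or> k = n - 1)"
proof -
  have k1: "1 \<le> k" and kn: "k < n" using assms by auto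
  let ?E = "{d. c1_real_eigenvalue k n d}"
  let ?d = "real n * (\<Sum>a<k. cos (theta k n a))"
  have dE: "?d \<in> ?E" using d0_eigen[OF k1 kn] by simp
  have fin: "finite ?E" by (rule fin_eig)
  have ge: "delta0 k n \<ge> ?d" unfolding delta0_def using fin dE by (rule Max_ge)
  have tm1: "real (k*(n-k)) + 1 \<le> ?d" using trig_main(1)[OF k1 kn] unfolding theta_def .
  have part1: "delta0 k n \<ge> real (k * (n - k)) + 1" using ge tm1 by linarith
  have part2: "delta0 k n = real (k * (n - k)) + 1 \<longleftrightarrow> k = 1 \<or> k = n - 1"
  proof
    assume eq: "delta0 k n = real (k * (n - k)) + 1"
    show "k = 1 \<or> k = n - 1"
    proof (rule ccontr)
      assume "\<not> (k = 1 \<or> k = n - 1)"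
      hence "2 \<le> k" "k + 2 \<le> n" using k1 kn by auto
      hence "real (k*(n-k)) + 1 < ?d" using trig_main(2)[OF k1 kn] unfolding theta_def by blast
      thus False using ge eq by linarith
    qed
  next
    assume kk: "k = 1 \<or> k = n - 1"
    have "delta0 k n \<in> ?E" unfolding delta0_def using fin dE by (intro Max_in) auto
    hence "delta0 k n \<le> real n" using ub[OF k1 kn kk] by simp
    moreover have "real (k * (n - k)) + 1 = real n" using kk kn by (auto simp: of_nat_diff)
    ultimately show "delta0 k n = real (k * (n - k)) + 1" using part1 by linarith
  qed
  show ?thesis using part1 part2 by blast
qed

end
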